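(* Let $m\ge1$, $0\le r\le m$, $\delta\in(0,\tfrac12)$, and let $W$ be the random coefficient vector described in the context. Let $A\in GL_m(\mathbb{F}_2)$, $b\in\mathbb{F}_2^m$, and let $\pi=\pi_{A,b,r}:\mathbb{F}_2^{\binom{m}{r}}\to\mathbb{F}_2^{\binom{m}{r}}$ be the map sending the coefficient vector $(u_I)_{|I|=r}$ of $P(x)=\sum_{|I|=r}u_Ix_I$ to the vector of coefficients of the degree-$r$ monomials $x_J$ ($|J|=r$) in the multilinear reduction of $P(Ax+b)$. Then for every linear subspace $\mathcal{G}\subseteq\mathbb{F}_2^{\binom{m}{r}}$, \[d(U_{\mathcal{G}};\,W_r|W_{>r})=d(U_{\pi(\mathcal{G})};\,W_r|W_{>r}),\] where $\pi(\mathcal{G})=\{\pi(g):g\in\mathcal{G}\}$ and $U_{\mathcal{H}}$ denotes a uniform random variable on $\mathcal{H}$.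
   Context: Let $n=2^m$. Every function $\mathbb{F}_2^m\to\mathbb{F}_2$ is uniquely a multilinear polynomial $\sum_{S\subseteq[m]}c_Sx_S$ with $x_S=\prod_{i\in S}x_i$; "multilinear reduction" means using $x_i^2=x_i$. Let $Z=(Z_x)_{x\in\mathbb{F}_2^m}$ have i.i.d. Bernoulli$(\delta)$ entries, and let $W=(W_S)_{S\subseteq[m]}$ be the coefficient vector of the multilinear polynomial whose evaluation table on $\mathbb{F}_2^m$ is $Z$ (equivalently $W_S=\sum_{x:\,\{i:x_i=1\}\subseteq S}Z_x$). Set $W_r=(W_S)_{|S|=r}$ and $W_{>r}=(W_S)_{|S|>r}$. Entropies are base 2, $H(V|C)=H(V,C)-H(C)$. For a subspace $\mathcal{H}$, $d(U_{\mathcal{H}};W_r|W_{>r}):=H(U+W'_r\mid W'_{>r})-\tfrac12\big(H(U)+H(W_r|W_{>r})\big)$, where $(W'_r,W'_{>r})\sim(W_r,W_{>r})$ and $U\sim U_{\mathcal{H}}$ is independent of it. *)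

theory Defs
  imports "HOL-Library.Z2" "Jordan_Normal_Form.Matrix"
begin

(* F_2 is the type bit (a field). Points of F_2^m are vectors in carrier_vec m.
   Monomials x_S are indexed by sets S \<subseteq> {..<m}. *)

definition xmon :: "nat set \<Rightarrow> bit vec \<Rightarrow> bit" where
  "xmon S x = (\<Prod>i\<in>S. x $ i)"

definition mcoeffs :: "nat \<Rightarrow> (bit vec \<Rightarrow> bit) \<Rightarrow> nat set \<Rightarrow> bit" where
  "mcoeffs m f = (THE c. (\<forall>S. \<not> S \<subseteq> {..<m} \<longrightarrow> c S = 0) \<and>
      (\<forall>x\<in>carrier_vec m. f x = (\<Sum>S\<in>Pow {..<m}. c S * xmon S x)))"

definition layer :: "nat \<Rightarrow> nat \<Rightarrow> nat set set" where
  "layer m r = {S. S \<subseteq> {..<m} \<and> card S = r}"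

(* F_2^{binom m r}: vectors indexed by layer m r, zero outside *)
definition vecs :: "nat \<Rightarrow> nat \<Rightarrow> (nat set \<Rightarrow> bit) set" where
  "vecs m r = {u. \<forall>S. S \<notin> layer m r \<longrightarrow> u S = 0}"

definition f2_subspace :: "nat \<Rightarrow> nat \<Rightarrow> (nat set \<Rightarrow> bit) set \<Rightarrow> bool" where
  "f2_subspace m r G \<longleftrightarrow> G \<subseteq> vecs m r \<and> (\<lambda>_. 0) \<in> G \<and>
     (\<forall>u\<in>G. \<forall>v\<in>G. (\<lambda>S. u S + v S) \<in> G) \<and> (\<forall>c. \<forall>u\<in>G. (\<lambda>S. c * u S) \<in> G)"

(* sample space of Z = (Z_x)_{x \<in> F_2^m} and its i.i.d. Bernoulli(delta) law *)
definition ZSpace :: "nat \<Rightarrow> (bit vec \<Rightarrow> bit) set" where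
  "ZSpace m = carrier_vec m \<rightarrow>\<^sub>E UNIV"

definition zprob :: "nat \<Rightarrow> real \<Rightarrow> (bit vec \<Rightarrow> bit) \<Rightarrow> real" where
  "zprob m \<delta> z = (\<Prod>x\<in>carrier_vec m. if z x = 1 then \<delta> else 1 - \<delta>)"

definition Wc :: "nat \<Rightarrow> (bit vec \<Rightarrow> bit) \<Rightarrow> nat set \<Rightarrow> bit" where
  "Wc m z = mcoeffs m z"

definition Wr :: "nat \<Rightarrow> nat \<Rightarrow> (bit vec \<Rightarrow> bit) \<Rightarrow> nat set \<Rightarrow> bit" where
  "Wr m r z = (\<lambda>S. if S \<in> layer m r then Wc m z S else 0)"

definition Wgt :: "nat \<Rightarrow> nat \<Rightarrow> (bit vec \<Rightarrow> bit) \<Rightarrow> nat set \<Rightarrow> bit" where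
  "Wgt m r z = (\<lambda>S. if S \<subseteq> {..<m} \<and> r < card S then Wc m z S else 0)"

definition prob_of :: "'w set \<Rightarrow> ('w \<Rightarrow> real) \<Rightarrow> ('w \<Rightarrow> 'v) \<Rightarrow> 'v \<Rightarrow> real" where
  "prob_of \<Omega> p X v = (\<Sum>\<omega>\<in>\<Omega>. if X \<omega> = v then p \<omega> else 0)"

definition entropy2 :: "'w set \<Rightarrow> ('w \<Rightarrow> real) \<Rightarrow> ('w \<Rightarrow> 'v) \<Rightarrow> real" where
  "entropy2 \<Omega> p X = - (\<Sum>v\<in>X ` \<Omega>. prob_of \<Omega> p X v * log 2 (prob_of \<Omega> p X v))"

definition cond_entropy2 :: "'w set \<Rightarrow> ('w \<Rightarrow> real) \<Rightarrow> ('w \<Rightarrow> 'v) \<Rightarrow> ('w \<Rightarrow> 'u) \<Rightarrow> real" where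
  "cond_entropy2 \<Omega> p X Y = entropy2 \<Omega> p (\<lambda>\<omega>. (X \<omega>, Y \<omega>)) - entropy2 \<Omega> p Y"

(* d(U_H; W_r | W_{>r}); U uniform on H, independent of (W'_r, W'_{>r}) *)
definition dist_W :: "nat \<Rightarrow> real \<Rightarrow> nat \<Rightarrow> (nat set \<Rightarrow> bit) set \<Rightarrow> real" where
  "dist_W m \<delta> r H =
     cond_entropy2 (H \<times> ZSpace m) (\<lambda>(u, z). zprob m \<delta> z / real (card H))
        (\<lambda>(u, z). (\<lambda>S. u S + Wr m r z S)) (\<lambda>(u, z). Wgt m r z)
     - (entropy2 H (\<lambda>u. 1 / real (card H)) id
        + cond_entropy2 (ZSpace m) (zprob m \<delta>) (Wr m r) (Wgt m r)) / 2"

definition pi_map :: "nat \<Rightarrow> bit mat \<Rightarrow> bit vec \<Rightarrow> nat \<Rightarrow> (nat set \<Rightarrow> bit) \<Rightarrow> nat set \<Rightarrow> bit" where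
  "pi_map m A b r u = (\<lambda>J. if J \<in> layer m r then
      mcoeffs m (\<lambda>x. \<Sum>I\<in>layer m r. u I * xmon I (A *\<^sub>v x + b)) J else 0)"

end

theory Submission
  imports Defs
begin


declare add_bit_eq_xor[simp del] mult_bit_eq_and[simp del]

lemma bit_add_self[simp]: "(a::bit) + a = 0" by (cases a) simp_all
lemma bit_add_self2[simp]: "(a::bit) + (a + b) = b" by (cases a; cases b) simp_all
lemma bit_add_self3: "(a::bit) + b + b = a" by (cases a; cases b) simp_all
lemma bit_add_eq0: "((a::bit) + b = 0) = (a = b)" by (cases a; cases b) simp_all

definition ev :: "nat \<Rightarrow> (nat set \<Rightarrow> bit) \<Rightarrow> bit vec \<Rightarrow> bit" where
  "ev m c x = (\<Sum>S\<in>Pow {..<m}. c S * xmon S x)"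
definition suppok :: "nat \<Rightarrow> (nat set \<Rightarrow> bit) \<Rightarrow> bool" where
  "suppok m c = (\<forall>S. \<not> S \<subseteq> {..<m} \<longrightarrow> c S = 0)"
definition ind :: "nat \<Rightarrow> nat set \<Rightarrow> bit vec" where
  "ind m S = vec m (\<lambda>i. if i \<in> S then 1 else 0)"

lemma xmon_eq: "finite S \<Longrightarrow> xmon S x = (if \<forall>i\<in>S. x $ i = 1 then 1 else 0)"
proof (induction S rule: finite_induct)
  case empty then show ?case by (simp add: xmon_def)
next
  case (insert a S)
  have "xmon (insert a S) x = x $ a * xmon S x" using insert by (simp add: xmon_def)
  then show ?case using insert by (cases "x $ a") auto
qed

lemma xmon_insert: "finite S \<Longrightarrow> a \<notin> S \<Longrightarrow> xmon (insert a S) x = x $ a * xmon S x"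
  by (simp add: xmon_def)

lemma xmon_empty[simp]: "xmon {} x = 1" by (simp add: xmon_def)
lemma xmon_single[simp]: "xmon {j} x = x $ j" by (simp add: xmon_def)

lemma xmon_Un: "finite S \<Longrightarrow> finite T \<Longrightarrow> xmon S x * xmon T x = xmon (S \<union> T) x"
  by (auto simp: xmon_eq)

lemma ind_carrier[simp]: "ind m S \<in> carrier_vec m" by (simp add: ind_def carrier_vecI)

lemma xmon_ind: "T \<subseteq> {..<m} \<Longrightarrow> xmon T (ind m S) = (if T \<subseteq> S then 1 else 0)"
proof -
  assume T: "T \<subseteq> {..<m}"
  then have fin: "finite T" using finite_subset by blast
  have e: "\<And>i. i \<in> T \<Longrightarrow> ind m S $ i = (if i \<in> S then 1 else 0)" using T by (auto simp: ind_def)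
  then have "(\<forall>i\<in>T. ind m S $ i = 1) = (T \<subseteq> S)" by auto
  then show ?thesis using fin by (simp add: xmon_eq)
qed

lemma sumPow_insert:
  assumes "finite X" "a \<notin> X"
  shows "(\<Sum>S\<in>Pow (insert a X). h S) = (\<Sum>S\<in>Pow X. h S) + (\<Sum>S\<in>Pow X. h (insert a S))"
proof -
  have "Pow (insert a X) = Pow X \<union> insert a ` Pow X" by (rule Pow_insert)
  moreover have "Pow X \<inter> insert a ` Pow X = {}" using assms by auto
  moreover have "inj_on (insert a) (Pow X)" using assms unfolding inj_on_def
    by (metis Diff_insert_absorb PowD in_mono)
  ultimately show ?thesis using assms
    by (simp add: sum.union_disjoint sum.reindex)
qed

lemma moebius: "finite X \<Longrightarrow> (\<Sum>S\<in>Pow X. \<Sum>T\<in>Pow S. g T) = (g X :: bit)" for X :: "'a set"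
proof (induction X arbitrary: g rule: finite_induct)
  case empty then show ?case by simp
next
  case (insert a X)
  have fS: "\<And>S. S \<in> Pow X \<Longrightarrow> finite S \<and> a \<notin> S" using insert finite_subset by blast
  have "(\<Sum>S\<in>Pow (insert a X). \<Sum>T\<in>Pow S. g T)
     = (\<Sum>S\<in>Pow X. \<Sum>T\<in>Pow S. g T) + (\<Sum>S\<in>Pow X. \<Sum>T\<in>Pow (insert a S). g T)"
    using insert by (simp add: sumPow_insert)
  also have "(\<Sum>S\<in>Pow X. \<Sum>T\<in>Pow (insert a S). g T)
     = (\<Sum>S\<in>Pow X. (\<Sum>T\<in>Pow S. g T) + (\<Sum>T\<in>Pow S. g (insert a T)))"
    by (rule sum.cong) (use fS in \<open>simp_all add: sumPow_insert\<close>)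
  also have "\<dots> = (\<Sum>S\<in>Pow X. \<Sum>T\<in>Pow S. g T) + (\<Sum>S\<in>Pow X. \<Sum>T\<in>Pow S. g (insert a T))"
    by (simp add: sum.distrib)
  finally have "(\<Sum>S\<in>Pow (insert a X). \<Sum>T\<in>Pow S. g T) = (\<Sum>S\<in>Pow X. \<Sum>T\<in>Pow S. g (insert a T))"
    by simp
  also have "\<dots> = g (insert a X)" using insert.IH[of "\<lambda>T. g (insert a T)"] by simp
  finally show ?case .
qed

lemma vec_ind: "x \<in> carrier_vec m \<Longrightarrow> x = ind m {i. i < m \<and> x $ i = 1}"
  by (rule eq_vecI) (auto simp: ind_def)

lemma rep_exists: "\<exists>c. suppok m c \<and> (\<forall>x\<in>carrier_vec m. f x = ev m c x)"
proof -
  define c where "c S = (if S \<subseteq> {..<m} then \<Sum>T\<in>Pow S. f (ind m T) else 0)" for S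
  have "suppok m c" by (simp add: suppok_def c_def)
  moreover have "f x = ev m c x" if x: "x \<in> carrier_vec m" for x
  proof -
    define X where "X = {i. i < m \<and> x $ i = 1}"
    have xX: "x = ind m X" using vec_ind[OF x] by (simp add: X_def)
    have Xs: "X \<subseteq> {..<m}" by (auto simp: X_def)
    have "ev m c x = (\<Sum>S\<in>Pow {..<m}. if S \<subseteq> X then c S else 0)"
      unfolding ev_def by (rule sum.cong) (auto simp: xX xmon_ind)
    also have "\<dots> = (\<Sum>S\<in>Pow X. c S)"
    proof -
      have "Pow X = {S\<in>Pow {..<m}. S \<subseteq> X}" using Xs by auto
      then show ?thesis using sum.inter_filter[of "Pow {..<m}" c "\<lambda>S. S \<subseteq> X"] by simp
    qed
    also have "(\<Sum>S\<in>Pow X. c S) = (\<Sum>S\<in>Pow X. \<Sum>T\<in>Pow S. f (ind m T))"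
      by (rule sum.cong) (use Xs in \<open>auto simp: c_def\<close>)
    also have "\<dots> = f (ind m X)" by (rule moebius) (use Xs finite_subset in blast)
    finally show ?thesis using xX by simp
  qed
  ultimately show ?thesis by blast
qed

lemma rep_unique0:
  assumes sc: "suppok m c" and z: "\<forall>x\<in>carrier_vec m. ev m c x = 0"
  shows "c = (\<lambda>_. 0)"
proof -
  have "\<forall>S. card S = n \<longrightarrow> c S = 0" for n
  proof (induction n rule: less_induct)
    case (less n)
    show ?case
    proof (intro allI impI)
      fix S :: "nat set" assume cS: "card S = n"
      show "c S = 0"
      proof (cases "S \<subseteq> {..<m}")
        case False then show ?thesis using sc by (simp add: suppok_def)
      next
        case True
        then have fin: "finite S" using finite_subset by blast
        have "0 = ev m c (ind m S)" using z by simp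
        also have "\<dots> = (\<Sum>T\<in>Pow {..<m}. if T = S then c S else 0)"
          unfolding ev_def
        proof (rule sum.cong)
          fix T assume T: "T \<in> Pow {..<m}"
          show "c T * xmon T (ind m S) = (if T = S then c S else 0)"
          proof (cases "T \<subseteq> S")
            case True
            show ?thesis
            proof (cases "T = S")
              case False
              then have "card T < n" using True fin cS psubset_card_mono by blast
              then show ?thesis using less False by auto
            qed (use T in \<open>simp add: xmon_ind\<close>)
          next
            case False then show ?thesis using T by (auto simp: xmon_ind)
          qed
        qed simp
        also have "\<dots> = c S" using True by simp
        finally show ?thesis by simp
      qed
    qed
  qed
  then show ?thesis by auto
qed

lemma ev_add: "ev m (\<lambda>S. c S + d S) x = ev m c x + ev m d x"
  by (simp add: ev_def distrib_right sum.distrib)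

lemma mcoeffs_eqI:
  assumes sc: "suppok m c" and r: "\<forall>x\<in>carrier_vec m. f x = ev m c x"
  shows "mcoeffs m f = c"
  unfolding mcoeffs_def
proof (rule the_equality)
  show "(\<forall>S. \<not> S \<subseteq> {..<m} \<longrightarrow> c S = 0) \<and> (\<forall>x\<in>carrier_vec m. f x = (\<Sum>S\<in>Pow {..<m}. c S * xmon S x))"
    using sc r by (simp add: suppok_def ev_def)
next
  fix d assume d: "(\<forall>S. \<not> S \<subseteq> {..<m} \<longrightarrow> d S = 0) \<and> (\<forall>x\<in>carrier_vec m. f x = (\<Sum>S\<in>Pow {..<m}. d S * xmon S x))"
  have "suppok m (\<lambda>S. d S + c S)" using d sc by (simp add: suppok_def)
  moreover have "\<forall>x\<in>carrier_vec m. ev m (\<lambda>S. d S + c S) x = 0"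
    using d r by (simp add: ev_add) (simp add: ev_def)
  ultimately have "(\<lambda>S. d S + c S) = (\<lambda>_. 0)" by (rule rep_unique0)
  then show "d = c" by (auto simp: fun_eq_iff bit_add_eq0)
qed

lemma mcoeffs_props: "suppok m (mcoeffs m f) \<and> (\<forall>x\<in>carrier_vec m. f x = ev m (mcoeffs m f) x)"
proof -
  obtain c where "suppok m c" "\<forall>x\<in>carrier_vec m. f x = ev m c x" using rep_exists by blast
  moreover then have "mcoeffs m f = c" by (rule mcoeffs_eqI)
  ultimately show ?thesis by simp
qed

lemma mcoeffs_ev: "x \<in> carrier_vec m \<Longrightarrow> f x = ev m (mcoeffs m f) x"
  using mcoeffs_props by blast

lemma mcoeffs_supp: "\<not> S \<subseteq> {..<m} \<Longrightarrow> mcoeffs m f S = 0"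
  using mcoeffs_props unfolding suppok_def by blast

lemma mcoeffs_cong: "(\<And>x. x \<in> carrier_vec m \<Longrightarrow> f x = g x) \<Longrightarrow> mcoeffs m f = mcoeffs m g"
  by (rule mcoeffs_eqI) (use mcoeffs_props[of m g] in auto)

lemma mcoeffs_add: "mcoeffs m (\<lambda>x. f x + g x) = (\<lambda>S. mcoeffs m f S + mcoeffs m g S)"
  by (rule mcoeffs_eqI) (use mcoeffs_props[of m f] mcoeffs_props[of m g] in \<open>auto simp: suppok_def ev_add\<close>)

lemma mcoeffs_scale: "mcoeffs m (\<lambda>x. a * f x) = (\<lambda>S. a * mcoeffs m f S)"
proof (rule mcoeffs_eqI)
  show "suppok m (\<lambda>S. a * mcoeffs m f S)" using mcoeffs_props[of m f] by (simp add: suppok_def)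
  show "\<forall>x\<in>carrier_vec m. a * f x = ev m (\<lambda>S. a * mcoeffs m f S) x"
    using mcoeffs_props[of m f] by (simp add: ev_def sum_distrib_left mult.assoc)
qed

lemma mcoeffs_zero: "mcoeffs m (\<lambda>x. 0) = (\<lambda>S. 0)"
  by (rule mcoeffs_eqI) (auto simp: suppok_def ev_def)

lemma mcoeffs_sum: "finite I \<Longrightarrow> mcoeffs m (\<lambda>x. \<Sum>i\<in>I. f i x) = (\<lambda>S. \<Sum>i\<in>I. mcoeffs m (f i) S)"
  by (induction I rule: finite_induct) (simp_all add: mcoeffs_zero mcoeffs_add)

lemma mcoeffs_xmon: "U \<subseteq> {..<m} \<Longrightarrow> mcoeffs m (xmon U) = (\<lambda>S. if S = U then 1 else 0)"
proof (rule mcoeffs_eqI)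
  assume U: "U \<subseteq> {..<m}"
  show "suppok m (\<lambda>S. if S = U then 1 else 0)" using U by (auto simp: suppok_def)
  show "\<forall>x\<in>carrier_vec m. xmon U x = ev m (\<lambda>S. if S = U then 1 else 0) x"
  proof
    fix x
    have "ev m (\<lambda>S. if S = U then 1 else 0) x = (\<Sum>S\<in>Pow {..<m}. if S = U then xmon U x else 0)"
      unfolding ev_def by (rule sum.cong) auto
    also have "\<dots> = xmon U x" using U by simp
    finally show "xmon U x = ev m (\<lambda>S. if S = U then 1 else 0) x" by simp
  qed
qed



definition degB :: "nat \<Rightarrow> nat \<Rightarrow> (bit vec \<Rightarrow> bit) \<Rightarrow> bool" where
  "degB m k f = (\<forall>T. k \<le> card T \<longrightarrow> mcoeffs m f T = 0)"

lemma xmon_empty_fun: "xmon {} = (\<lambda>x. 1)" by (simp add: fun_eq_iff)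

lemma degB_cong: "(\<And>x. x \<in> carrier_vec m \<Longrightarrow> f x = g x) \<Longrightarrow> degB m k f = degB m k g"
  unfolding degB_def using mcoeffs_cong[of m f g] by simp

lemma degB_congI: "degB m k g \<Longrightarrow> (\<And>x. x \<in> carrier_vec m \<Longrightarrow> f x = g x) \<Longrightarrow> degB m k f"
  using degB_cong[of m f g k] by simp

lemma degB_add: "degB m k f \<Longrightarrow> degB m k g \<Longrightarrow> degB m k (\<lambda>x. f x + g x)"
  unfolding degB_def by (simp add: mcoeffs_add)

lemma degB_zero: "degB m k (\<lambda>x. 0)"
  unfolding degB_def by (simp add: mcoeffs_zero)

lemma degB_sum: "finite I \<Longrightarrow> (\<And>i. i \<in> I \<Longrightarrow> degB m k (f i)) \<Longrightarrow> degB m k (\<lambda>x. \<Sum>i\<in>I. f i x)"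
  unfolding degB_def by (simp add: mcoeffs_sum)

lemma degB_scale: "degB m k f \<or> a = 0 \<Longrightarrow> degB m k (\<lambda>x. a * f x)"
  unfolding degB_def by (auto simp add: mcoeffs_scale)

lemma degB_mono: "degB m k f \<Longrightarrow> k \<le> k' \<Longrightarrow> degB m k' f"
  unfolding degB_def by auto

lemma degB_xmon: "U \<subseteq> {..<m} \<Longrightarrow> degB m (card U + 1) (xmon U)"
  unfolding degB_def by (auto simp add: mcoeffs_xmon)

lemma degB_coeff: "degB m k f \<Longrightarrow> mcoeffs m f S \<noteq> 0 \<Longrightarrow> card S < k"
  unfolding degB_def using not_less by blast

lemma degB_mult:
  assumes f: "degB m (j+1) f" and g: "degB m (k+1) g"
  shows "degB m (j+k+1) (\<lambda>x. f x * g x)"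
proof -
  let ?cf = "mcoeffs m f" and ?cg = "mcoeffs m g"
  have "degB m (j+k+1) (\<lambda>x. \<Sum>S\<in>Pow {..<m}. \<Sum>T\<in>Pow {..<m}. (?cf S * ?cg T) * xmon (S \<union> T) x)"
  proof (intro degB_sum finite_Pow_iff[THEN iffD2] finite_lessThan)
    fix S T assume S: "S \<in> Pow {..<m}" and T: "T \<in> Pow {..<m}"
    show "degB m (j + k + 1) (\<lambda>x. ?cf S * ?cg T * xmon (S \<union> T) x)"
    proof (cases "?cf S = 0 \<or> ?cg T = 0")
      case True then show ?thesis by (intro degB_scale) auto
    next
      case False
      then have "card S < j+1" "card T < k+1" using degB_coeff f g by auto
      moreover have "card (S \<union> T) \<le> card S + card T" by (rule card_Un_le)
      ultimately have "card (S \<union> T) + 1 \<le> j+k+1" by linarith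
      moreover have "degB m (card (S \<union> T) + 1) (xmon (S \<union> T))" using S T by (intro degB_xmon) auto
      ultimately show ?thesis by (intro degB_scale) (auto intro: degB_mono)
    qed
  qed
  moreover have "f x * g x = (\<Sum>S\<in>Pow {..<m}. \<Sum>T\<in>Pow {..<m}. (?cf S * ?cg T) * xmon (S \<union> T) x)"
    if x: "x \<in> carrier_vec m" for x
  proof -
    have "f x * g x = ev m ?cf x * ev m ?cg x" using x mcoeffs_ev by metis
    also have "\<dots> = (\<Sum>S\<in>Pow {..<m}. \<Sum>T\<in>Pow {..<m}. (?cf S * xmon S x) * (?cg T * xmon T x))"
      unfolding ev_def by (rule sum_product)
    also have "\<dots> = (\<Sum>S\<in>Pow {..<m}. \<Sum>T\<in>Pow {..<m}. (?cf S * ?cg T) * xmon (S \<union> T) x)"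
    proof (intro sum.cong refl)
      fix S T assume "S \<in> Pow {..<m}" "T \<in> Pow {..<m}"
      then have "finite S" "finite T" using finite_subset by auto
      then have "xmon S x * xmon T x = xmon (S \<union> T) x" by (rule xmon_Un)
      then show "(?cf S * xmon S x) * (?cg T * xmon T x) = (?cf S * ?cg T) * xmon (S \<union> T) x"
        by (metis mult.assoc mult.commute)
    qed
    finally show ?thesis .
  qed
  ultimately show ?thesis by (rule degB_congI)
qed

lemma affine_carrier:
  "A \<in> carrier_mat m m \<Longrightarrow> b \<in> carrier_vec m \<Longrightarrow> x \<in> carrier_vec m \<Longrightarrow> A *\<^sub>v x + b \<in> carrier_vec m"
  by simp

lemma degB_coord:
  assumes A: "A \<in> carrier_mat m m" and b: "b \<in> carrier_vec m" and i: "i < m"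
  shows "degB m 2 (\<lambda>x. (A *\<^sub>v x + b) $ i)"
proof -
  have "degB m 2 (\<lambda>x. (\<Sum>j\<in>{0..<m}. A $$ (i,j) * xmon {j} x) + b $ i * xmon {} x)"
  proof (intro degB_add degB_sum degB_scale disjI1)
    show "degB m 2 (xmon {})" using degB_xmon[of "{}" m] degB_mono[of m 1 "xmon {}" 2] by simp
    fix j assume "j \<in> {0..<m}"
    then show "degB m 2 (xmon {j})" using degB_xmon[of "{j}" m] by (simp add: numeral_2_eq_2)
  qed simp
  moreover have "(A *\<^sub>v x + b) $ i = (\<Sum>j\<in>{0..<m}. A $$ (i,j) * xmon {j} x) + b $ i * xmon {} x"
    if x: "x \<in> carrier_vec m" for x
  proof -
    have "(A *\<^sub>v x + b) $ i = (A *\<^sub>v x) $ i + b $ i" using b i by simp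
    also have "(A *\<^sub>v x) $ i = row A i \<bullet> x" using A i by simp
    also have "\<dots> = (\<Sum>j\<in>{0..<m}. A $$ (i,j) * xmon {j} x)"
      unfolding scalar_prod_def using A x i by (intro sum.cong) auto
    finally show ?thesis by simp
  qed
  ultimately show ?thesis by (rule degB_congI)
qed

lemma degB_xmon_affine:
  assumes A: "A \<in> carrier_mat m m" and b: "b \<in> carrier_vec m"
  shows "S \<subseteq> {..<m} \<Longrightarrow> degB m (card S + 1) (\<lambda>x. xmon S (A *\<^sub>v x + b))"
proof (induction S rule: infinite_finite_induct)
  case (infinite S) then show ?case using finite_subset by blast
next
  case empty
  show ?case using degB_xmon[of "{}" m] by (simp add: xmon_empty_fun)
next
  case (insert a S)
  have "degB m (1 + card S + 1) (\<lambda>x. (A *\<^sub>v x + b) $ a * xmon S (A *\<^sub>v x + b))"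
    using insert degB_coord[OF A b, of a] by (intro degB_mult) (auto simp: numeral_2_eq_2)
  then show ?case using insert by (simp add: xmon_insert)
qed

lemma degB_subst:
  assumes A: "A \<in> carrier_mat m m" and b: "b \<in> carrier_vec m" and f: "degB m k f"
  shows "degB m k (\<lambda>x. f (A *\<^sub>v x + b))"
proof -
  have "degB m k (\<lambda>x. \<Sum>S\<in>Pow {..<m}. mcoeffs m f S * xmon S (A *\<^sub>v x + b))"
  proof (intro degB_sum degB_scale finite_Pow_iff[THEN iffD2] finite_lessThan)
    fix S assume S: "S \<in> Pow {..<m}"
    show "degB m k (\<lambda>x. xmon S (A *\<^sub>v x + b)) \<or> mcoeffs m f S = 0"
    proof (cases "mcoeffs m f S = 0")
      case False
      then have "card S + 1 \<le> k" using degB_coeff[OF f] by fastforce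
      then show ?thesis using degB_xmon_affine[OF A b, of S] S degB_mono by blast
    qed simp
  qed
  moreover have "f (A *\<^sub>v x + b) = (\<Sum>S\<in>Pow {..<m}. mcoeffs m f S * xmon S (A *\<^sub>v x + b))"
    if x: "x \<in> carrier_vec m" for x
    using mcoeffs_ev[OF affine_carrier[OF A b x], of f] by (simp add: ev_def)
  ultimately show ?thesis by (rule degB_congI)
qed



lemma bit_swap: "((a::bit) + b = c + d) = (a + c = b + d)" by (cases a; cases b; cases c; cases d) simp_all

lemma inv_exists:
  assumes A: "A \<in> carrier_mat m m" and inv: "invertible_mat A"
  shows "\<exists>B. B \<in> carrier_mat m m \<and> A * B = 1\<^sub>m m \<and> B * A = 1\<^sub>m m"
proof -
  obtain B where B: "A * B = 1\<^sub>m (dim_row A)" "B * A = 1\<^sub>m (dim_row B)"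
    using inv unfolding invertible_mat_def inverts_mat_def by blast
  have "dim_col B = m" using arg_cong[OF B(1), of dim_col] A by simp
  moreover have "dim_row B = m" using arg_cong[OF B(2), of dim_col] A by simp
  ultimately show ?thesis using B A by (intro exI[of _ B]) auto
qed

lemma vec_add_cancel: "v \<in> carrier_vec m \<Longrightarrow> w \<in> carrier_vec m \<Longrightarrow> (v::bit vec) + w + w = v"
  by (intro eq_vecI) (auto simp: bit_add_self3)

lemma affine_inv:
  fixes A B :: "bit mat"
  assumes A: "A \<in> carrier_mat m m" and B: "B \<in> carrier_mat m m" and AB: "A * B = 1\<^sub>m m"
    and b: "b \<in> carrier_vec m" and x: "x \<in> carrier_vec m"
  shows "A *\<^sub>v (B *\<^sub>v x + B *\<^sub>v b) + b = x"
proof -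
  have "A *\<^sub>v (B *\<^sub>v x + B *\<^sub>v b) = A *\<^sub>v (B *\<^sub>v x) + A *\<^sub>v (B *\<^sub>v b)"
    using A B b x by (intro mult_add_distrib_mat_vec) auto
  also have "\<dots> = (A * B) *\<^sub>v x + (A * B) *\<^sub>v b" using A B b x by (simp add: assoc_mult_mat_vec)
  also have "\<dots> = x + b" unfolding AB by (simp only: one_mult_mat_vec[OF x] one_mult_mat_vec[OF b])
  finally show ?thesis using vec_add_cancel[OF x b] by simp
qed

lemma degB_subst_iff:
  assumes A: "A \<in> carrier_mat m m" and B: "B \<in> carrier_mat m m" and AB: "A * B = 1\<^sub>m m"
    and b: "b \<in> carrier_vec m"
  shows "degB m k (\<lambda>x. f (A *\<^sub>v x + b)) = degB m k f"
proof
  assume "degB m k f" then show "degB m k (\<lambda>x. f (A *\<^sub>v x + b))" by (rule degB_subst[OF A b])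
next
  assume h: "degB m k (\<lambda>x. f (A *\<^sub>v x + b))"
  have Bb: "B *\<^sub>v b \<in> carrier_vec m" using B b by simp
  have "degB m k (\<lambda>x. f (A *\<^sub>v (B *\<^sub>v x + B *\<^sub>v b) + b))" by (rule degB_subst[OF B Bb h])
  then show "degB m k f" by (rule degB_congI) (simp add: affine_inv[OF A B AB b])
qed

lemma Wc_cong: "(\<And>x. x \<in> carrier_vec m \<Longrightarrow> f x = g x) \<Longrightarrow> Wc m f = Wc m g"
  unfolding Wc_def by (rule mcoeffs_cong)

lemma Wr_cong: assumes "\<And>x. x \<in> carrier_vec m \<Longrightarrow> f x = g x" shows "Wr m r f = Wr m r g"
  unfolding Wr_def using Wc_cong[of m f g, OF assms] by (simp only:)

lemma Wgt_cong: assumes "\<And>x. x \<in> carrier_vec m \<Longrightarrow> f x = g x" shows "Wgt m r f = Wgt m r g"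
  unfolding Wgt_def using Wc_cong[of m f g, OF assms] by (simp only:)

lemma Wr_add: "Wr m r (\<lambda>x. f x + g x) = (\<lambda>S. Wr m r f S + Wr m r g S)"
  unfolding Wr_def Wc_def by (auto simp: mcoeffs_add)

lemma Wgt_add: "Wgt m r (\<lambda>x. f x + g x) = (\<lambda>S. Wgt m r f S + Wgt m r g S)"
  unfolding Wgt_def Wc_def by (auto simp: mcoeffs_add)

lemma Wgt_zero_iff: "(Wgt m r f = (\<lambda>S. 0)) = degB m (r+1) f"
  unfolding Wgt_def Wc_def degB_def fun_eq_iff
  using mcoeffs_supp[of _ m f] by (metis Suc_eq_plus1 Suc_le_eq)

lemma Wgt_eq_iff: "(Wgt m r f = Wgt m r g) = degB m (r+1) (\<lambda>x. f x + g x)"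
  unfolding Wgt_zero_iff[symmetric] Wgt_add by (simp add: fun_eq_iff bit_add_eq0)

lemma Wr_vecs: "Wr m r f \<in> vecs m r"
  unfolding Wr_def vecs_def by simp

lemma layer_sub: "layer m r \<subseteq> Pow {..<m}" by (auto simp: layer_def)
lemma finite_layer[simp]: "finite (layer m r)"
  using layer_sub finite_subset by (metis finite_Pow_iff finite_lessThan)

definition gp :: "nat \<Rightarrow> bit mat \<Rightarrow> bit vec \<Rightarrow> nat \<Rightarrow> (nat set \<Rightarrow> bit) \<Rightarrow> bit vec \<Rightarrow> bit" where
  "gp m A b r u = (\<lambda>x. \<Sum>I\<in>layer m r. u I * xmon I (A *\<^sub>v x + b))"

lemma pi_gp: "pi_map m A b r u = (\<lambda>J. if J \<in> layer m r then mcoeffs m (gp m A b r u) J else 0)"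
  unfolding pi_map_def gp_def by simp

lemma pi_add: "pi_map m A b r (\<lambda>S. u S + v S) = (\<lambda>S. pi_map m A b r u S + pi_map m A b r v S)"
proof -
  have e: "gp m A b r (\<lambda>S. u S + v S) = (\<lambda>x. gp m A b r u x + gp m A b r v x)"
    unfolding gp_def by (simp add: fun_eq_iff distrib_right sum.distrib)
  show ?thesis unfolding pi_gp e mcoeffs_add by (simp add: fun_eq_iff)
qed

lemma degB_gp:
  assumes A: "A \<in> carrier_mat m m" and b: "b \<in> carrier_vec m"
  shows "degB m (r+1) (gp m A b r u)"
  unfolding gp_def
proof (intro degB_sum degB_scale disjI1 finite_layer)
  fix I assume "I \<in> layer m r"
  then show "degB m (r+1) (\<lambda>x. xmon I (A *\<^sub>v x + b))"
    using degB_xmon_affine[OF A b, of I] by (auto simp: layer_def)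
qed

lemma ev_vecs: "u \<in> vecs m r \<Longrightarrow> ev m u x = (\<Sum>I\<in>layer m r. u I * xmon I x)"
  unfolding ev_def
  by (rule sum.mono_neutral_right) (auto simp: vecs_def layer_sub)

lemma suppok_vecs: "u \<in> vecs m r \<Longrightarrow> suppok m u"
  unfolding suppok_def vecs_def layer_def by auto

lemma pi_kernel:
  assumes A: "A \<in> carrier_mat m m" and B: "B \<in> carrier_mat m m" and AB: "A * B = 1\<^sub>m m"
    and b: "b \<in> carrier_vec m" and u: "u \<in> vecs m r" and z: "pi_map m A b r u = (\<lambda>_. 0)"
  shows "u = (\<lambda>_. 0)"
proof -
  have d1: "degB m r (gp m A b r u)"
    unfolding degB_def
  proof (intro allI impI)
    fix T :: "nat set" assume T: "r \<le> card T"
    show "mcoeffs m (gp m A b r u) T = 0"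
    proof (cases "T \<subseteq> {..<m}")
      case False then show ?thesis by (rule mcoeffs_supp)
    next
      case True
      show ?thesis
      proof (cases "card T = r")
        case True
        then have "T \<in> layer m r" using \<open>T \<subseteq> {..<m}\<close> by (simp add: layer_def)
        then show ?thesis using z unfolding pi_gp by (simp add: fun_eq_iff) (metis)
      next
        case False
        then show ?thesis using degB_gp[OF A b, of r u] T unfolding degB_def by simp
      qed
    qed
  qed
  have Bb: "B *\<^sub>v b \<in> carrier_vec m" using B b by simp
  define h where "h = (\<lambda>x. gp m A b r u (B *\<^sub>v x + B *\<^sub>v b))"
  have dh: "degB m r h" unfolding h_def by (rule degB_subst[OF B Bb d1])
  have "mcoeffs m h = u"
  proof (rule mcoeffs_eqI)
    show "suppok m u" using u by (rule suppok_vecs)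
    show "\<forall>x\<in>carrier_vec m. h x = ev m u x"
      using u by (simp add: h_def gp_def ev_vecs affine_inv[OF A B AB b])
  qed
  then have "\<And>I. I \<in> layer m r \<Longrightarrow> u I = 0" using dh unfolding degB_def layer_def by auto
  then show ?thesis using u unfolding vecs_def by auto
qed

lemma vecs_add: "u \<in> vecs m r \<Longrightarrow> v \<in> vecs m r \<Longrightarrow> (\<lambda>S. u S + v S) \<in> vecs m r"
  unfolding vecs_def by auto

lemma pi_inj:
  assumes A: "A \<in> carrier_mat m m" and B: "B \<in> carrier_mat m m" and AB: "A * B = 1\<^sub>m m"
    and b: "b \<in> carrier_vec m" and u: "u \<in> vecs m r" and v: "v \<in> vecs m r"
  shows "(pi_map m A b r u = pi_map m A b r v) = (u = v)"
proof
  assume e: "pi_map m A b r u = pi_map m A b r v"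
  have "pi_map m A b r (\<lambda>S. u S + v S) = (\<lambda>_. 0)" using e by (simp add: pi_add)
  then have "(\<lambda>S. u S + v S) = (\<lambda>_. 0)" by (rule pi_kernel[OF A B AB b vecs_add[OF u v]])
  then show "u = v" by (auto simp: fun_eq_iff bit_add_eq0)
qed simp

lemma Wr_subst:
  assumes A: "A \<in> carrier_mat m m" and b: "b \<in> carrier_vec m" and d: "degB m (r+1) f"
  shows "Wr m r (\<lambda>x. f (A *\<^sub>v x + b)) = pi_map m A b r (Wr m r f)"
proof -
  let ?M = "mcoeffs m f"
  define low where "low = (\<lambda>x. \<Sum>S\<in>Pow {..<m}. (if card S < r then ?M S else 0) * xmon S (A *\<^sub>v x + b))"
  have dl: "degB m r low" unfolding low_def
  proof (intro degB_sum degB_scale finite_Pow_iff[THEN iffD2] finite_lessThan)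
    fix S assume S: "S \<in> Pow {..<m}"
    show "degB m r (\<lambda>x. xmon S (A *\<^sub>v x + b)) \<or> (if card S < r then ?M S else 0) = 0"
    proof (cases "card S < r")
      case True
      then show ?thesis using degB_xmon_affine[OF A b, of S] S degB_mono[of m "card S + 1" _ r] by auto
    qed simp
  qed
  have eq: "f (A *\<^sub>v x + b) = low x + gp m A b r (Wr m r f) x" if x: "x \<in> carrier_vec m" for x
  proof -
    have "f (A *\<^sub>v x + b) = (\<Sum>S\<in>Pow {..<m}. ?M S * xmon S (A *\<^sub>v x + b))"
      using mcoeffs_ev[OF affine_carrier[OF A b x], of f] by (simp add: ev_def)
    also have "\<dots> = (\<Sum>S\<in>Pow {..<m}. (if card S < r then ?M S else 0) * xmon S (A *\<^sub>v x + b)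
                     + (if S \<in> layer m r then ?M S * xmon S (A *\<^sub>v x + b) else 0))"
    proof (rule sum.cong[OF refl])
      fix S assume S: "S \<in> Pow {..<m}"
      consider "card S < r" | "card S = r" | "r < card S" by linarith
      then show "?M S * xmon S (A *\<^sub>v x + b) = (if card S < r then ?M S else 0) * xmon S (A *\<^sub>v x + b)
                     + (if S \<in> layer m r then ?M S * xmon S (A *\<^sub>v x + b) else 0)"
      proof cases
        case 1 then show ?thesis by (simp add: layer_def)
      next
        case 2 then show ?thesis using S by (simp add: layer_def)
      next
        case 3
        then have "?M S = 0" using d unfolding degB_def by simp
        then show ?thesis using 3 by simp
      qed
    qed
    also have "\<dots> = low x + (\<Sum>S\<in>Pow {..<m}. if S \<in> layer m r then ?M S * xmon S (A *\<^sub>v x + b) else 0)"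
      by (simp add: sum.distrib low_def)
    also have "(\<Sum>S\<in>Pow {..<m}. if S \<in> layer m r then ?M S * xmon S (A *\<^sub>v x + b) else 0)
        = (\<Sum>S\<in>layer m r. ?M S * xmon S (A *\<^sub>v x + b))"
      by (rule sum.mono_neutral_cong_right) (auto simp: layer_sub)
    also have "\<dots> = gp m A b r (Wr m r f) x"
      unfolding gp_def Wr_def Wc_def by (rule sum.cong) auto
    finally show ?thesis .
  qed
  show ?thesis
  proof (rule ext)
    fix J
    show "Wr m r (\<lambda>x. f (A *\<^sub>v x + b)) J = pi_map m A b r (Wr m r f) J"
    proof (cases "J \<in> layer m r")
      case True
      have "mcoeffs m (\<lambda>x. f (A *\<^sub>v x + b)) = mcoeffs m (\<lambda>x. low x + gp m A b r (Wr m r f) x)"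
        by (rule mcoeffs_cong) (rule eq)
      moreover have "mcoeffs m low J = 0" using dl True unfolding degB_def layer_def by auto
      ultimately show ?thesis using True unfolding Wr_def Wc_def pi_gp by (simp add: mcoeffs_add)
    next
      case False then show ?thesis unfolding Wr_def pi_map_def by simp
    qed
  qed
qed

lemma wgt_equiv:
  assumes A: "A \<in> carrier_mat m m" and B: "B \<in> carrier_mat m m" and AB: "A * B = 1\<^sub>m m"
    and b: "b \<in> carrier_vec m"
  shows "(Wgt m r (\<lambda>x. z (A *\<^sub>v x + b)) = Wgt m r (\<lambda>x. z' (A *\<^sub>v x + b))) = (Wgt m r z = Wgt m r z')"
  unfolding Wgt_eq_iff using degB_subst_iff[OF A B AB b, of "r+1" "\<lambda>x. z x + z' x"] by simp

lemma key_equiv: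
  assumes A: "A \<in> carrier_mat m m" and B: "B \<in> carrier_mat m m" and AB: "A * B = 1\<^sub>m m"
    and b: "b \<in> carrier_vec m" and u: "u \<in> vecs m r" and u': "u' \<in> vecs m r"
  shows "((\<lambda>S. pi_map m A b r u S + Wr m r (\<lambda>x. z (A *\<^sub>v x + b)) S)
            = (\<lambda>S. pi_map m A b r u' S + Wr m r (\<lambda>x. z' (A *\<^sub>v x + b)) S)
          \<and> Wgt m r (\<lambda>x. z (A *\<^sub>v x + b)) = Wgt m r (\<lambda>x. z' (A *\<^sub>v x + b)))
       = ((\<lambda>S. u S + Wr m r z S) = (\<lambda>S. u' S + Wr m r z' S) \<and> Wgt m r z = Wgt m r z')"
proof -
  define d where "d = (\<lambda>x. z x + z' x)"
  have g1: "(Wgt m r (\<lambda>x. z (A *\<^sub>v x + b)) = Wgt m r (\<lambda>x. z' (A *\<^sub>v x + b))) = degB m (r+1) d"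
    unfolding Wgt_eq_iff d_def using degB_subst_iff[OF A B AB b, of "r+1" "\<lambda>x. z x + z' x"] by simp
  have g2: "(Wgt m r z = Wgt m r z') = degB m (r+1) d" unfolding Wgt_eq_iff d_def ..
  have "((\<lambda>S. pi_map m A b r u S + Wr m r (\<lambda>x. z (A *\<^sub>v x + b)) S)
            = (\<lambda>S. pi_map m A b r u' S + Wr m r (\<lambda>x. z' (A *\<^sub>v x + b)) S))
        = ((\<lambda>S. u S + Wr m r z S) = (\<lambda>S. u' S + Wr m r z' S))" if dd: "degB m (r+1) d"
  proof -
    have "((\<lambda>S. pi_map m A b r u S + Wr m r (\<lambda>x. z (A *\<^sub>v x + b)) S)
            = (\<lambda>S. pi_map m A b r u' S + Wr m r (\<lambda>x. z' (A *\<^sub>v x + b)) S))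
        = ((\<lambda>S. pi_map m A b r u S + pi_map m A b r u' S)
            = (\<lambda>S. Wr m r (\<lambda>x. z (A *\<^sub>v x + b)) S + Wr m r (\<lambda>x. z' (A *\<^sub>v x + b)) S))"
      by (simp add: fun_eq_iff bit_swap)
    also have "\<dots> = (pi_map m A b r (\<lambda>S. u S + u' S) = Wr m r (\<lambda>x. d (A *\<^sub>v x + b)))"
      by (simp add: pi_add d_def Wr_add)
    also have "\<dots> = (pi_map m A b r (\<lambda>S. u S + u' S) = pi_map m A b r (Wr m r d))"
      by (simp add: Wr_subst[OF A b dd])
    also have "\<dots> = ((\<lambda>S. u S + u' S) = Wr m r d)"
      by (rule pi_inj[OF A B AB b vecs_add[OF u u'] Wr_vecs])
    also have "\<dots> = ((\<lambda>S. u S + u' S) = (\<lambda>S. Wr m r z S + Wr m r z' S))"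
      by (simp add: d_def Wr_add)
    also have "\<dots> = ((\<lambda>S. u S + Wr m r z S) = (\<lambda>S. u' S + Wr m r z' S))"
      by (simp add: fun_eq_iff bit_swap)
    finally show ?thesis .
  qed
  then show ?thesis using g1 g2 by blast
qed



lemma entropy_reindex:
  assumes h: "bij_betw h \<Omega> \<Omega>'" and p: "\<And>\<omega>. \<omega> \<in> \<Omega> \<Longrightarrow> p' (h \<omega>) = p \<omega>"
  shows "entropy2 \<Omega>' p' X = entropy2 \<Omega> p (\<lambda>\<omega>. X (h \<omega>))"
proof -
  have pr: "prob_of \<Omega>' p' X v = prob_of \<Omega> p (\<lambda>\<omega>. X (h \<omega>)) v" for v
  proof -
    have "prob_of \<Omega>' p' X v = (\<Sum>\<omega>\<in>\<Omega>. if X (h \<omega>) = v then p' (h \<omega>) else 0)"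
      unfolding prob_of_def by (rule sum.reindex_bij_betw[OF h, symmetric])
    also have "\<dots> = prob_of \<Omega> p (\<lambda>\<omega>. X (h \<omega>)) v"
      unfolding prob_of_def using p by (intro sum.cong) auto
    finally show ?thesis .
  qed
  have im: "X ` \<Omega>' = (\<lambda>\<omega>. X (h \<omega>)) ` \<Omega>"
    using bij_betw_imp_surj_on[OF h] by auto
  show ?thesis unfolding entropy2_def pr im ..
qed

lemma entropy_equiv:
  assumes e: "\<And>\<omega> \<omega>'. \<omega> \<in> \<Omega> \<Longrightarrow> \<omega>' \<in> \<Omega> \<Longrightarrow> (Y \<omega> = Y \<omega>') = (X \<omega> = X \<omega>')"
  shows "entropy2 \<Omega> p Y = entropy2 \<Omega> p X"
proof -
  define f where "f v = Y (SOME \<omega>. \<omega> \<in> \<Omega> \<and> X \<omega> = v)" for v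
  have fX: "f (X \<omega>) = Y \<omega>" if w: "\<omega> \<in> \<Omega>" for \<omega>
  proof -
    have "\<exists>\<omega>0. \<omega>0 \<in> \<Omega> \<and> X \<omega>0 = X \<omega>" using w by blast
    then have "(SOME \<omega>0. \<omega>0 \<in> \<Omega> \<and> X \<omega>0 = X \<omega>) \<in> \<Omega> \<and> X (SOME \<omega>0. \<omega>0 \<in> \<Omega> \<and> X \<omega>0 = X \<omega>) = X \<omega>"
      by (rule someI_ex)
    then show ?thesis unfolding f_def using e w by blast
  qed
  have inj: "inj_on f (X ` \<Omega>)"
    unfolding inj_on_def using fX e by auto
  have im: "Y ` \<Omega> = f ` (X ` \<Omega>)" using fX by (auto simp: image_image)
  have pr: "prob_of \<Omega> p Y (f (X \<omega>0)) = prob_of \<Omega> p X (X \<omega>0)" if w0: "\<omega>0 \<in> \<Omega>" for \<omega>0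
    unfolding prob_of_def using fX[OF w0] e[OF _ w0] by (intro sum.cong) auto
  have "entropy2 \<Omega> p Y = - (\<Sum>v\<in>X ` \<Omega>. prob_of \<Omega> p Y (f v) * log 2 (prob_of \<Omega> p Y (f v)))"
    unfolding entropy2_def im sum.reindex[OF inj] by simp
  also have "\<dots> = entropy2 \<Omega> p X"
    unfolding entropy2_def using pr by (auto intro!: sum.cong)
  finally show ?thesis .
qed

lemma affine_inv2:
  fixes A B :: "bit mat"
  assumes A: "A \<in> carrier_mat m m" and B: "B \<in> carrier_mat m m" and BA: "B * A = 1\<^sub>m m"
    and b: "b \<in> carrier_vec m" and x: "x \<in> carrier_vec m"
  shows "B *\<^sub>v (A *\<^sub>v x + b) + B *\<^sub>v b = x"
proof -
  have "B *\<^sub>v (A *\<^sub>v x + b) = B *\<^sub>v (A *\<^sub>v x) + B *\<^sub>v b"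
    using A B b x by (intro mult_add_distrib_mat_vec) auto
  also have "\<dots> = (B * A) *\<^sub>v x + B *\<^sub>v b" using A B b x by (simp add: assoc_mult_mat_vec)
  also have "\<dots> = x + B *\<^sub>v b" unfolding BA by (simp only: one_mult_mat_vec[OF x])
  moreover have Bb: "B *\<^sub>v b \<in> carrier_vec m" using B b by simp
  ultimately show ?thesis using vec_add_cancel[OF x Bb] by simp
qed



theorem lemma6p4:
  fixes m r :: nat and \<delta> :: real and A :: "bit mat" and b :: "bit vec"
    and G :: "(nat set \<Rightarrow> bit) set"
  assumes "1 \<le> m" and "r \<le> m" and "0 < \<delta>" and "\<delta> < 1/2"
    and "A \<in> carrier_mat m m" and "invertible_mat A" and "b \<in> carrier_vec m"
    and "f2_subspace m r G"
  shows "dist_W m \<delta> r G = dist_W m \<delta> r (pi_map m A b r ` G)"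
proof -
  note A = \<open>A \<in> carrier_mat m m\<close> and b = \<open>b \<in> carrier_vec m\<close>
  obtain B where B: "B \<in> carrier_mat m m" and AB: "A * B = 1\<^sub>m m" and BA: "B * A = 1\<^sub>m m"
    using inv_exists[OF A \<open>invertible_mat A\<close>] by blast
  have Bb: "B *\<^sub>v b \<in> carrier_vec m" using B b by simp
  have Gv: "G \<subseteq> vecs m r" using \<open>f2_subspace m r G\<close> unfolding f2_subspace_def by blast
  define \<pi> where "\<pi> = pi_map m A b r"
  define G' where "G' = \<pi> ` G"
  define Z where "Z = ZSpace m"
  define \<sigma> where "\<sigma> z = restrict (\<lambda>x. z (A *\<^sub>v x + b)) (carrier_vec m)" for z :: "bit vec \<Rightarrow> bit"
  define \<tau> where "\<tau> z = restrict (\<lambda>x. z (B *\<^sub>v x + B *\<^sub>v b)) (carrier_vec m)" for z :: "bit vec \<Rightarrow> bit"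
  have inj\<pi>: "inj_on \<pi> G"
    unfolding inj_on_def \<pi>_def using pi_inj[OF A B AB b] Gv by blast
  have bij\<pi>: "bij_betw \<pi> G G'" unfolding G'_def using inj\<pi> by (rule bij_betw_imageI) simp
  have cardG: "card G' = card G" unfolding G'_def using inj\<pi> by (rule card_image)
  have bij\<sigma>: "bij_betw \<sigma> Z Z"
  proof (rule bij_betwI[where g = \<tau>])
    show "\<sigma> \<in> Z \<rightarrow> Z" unfolding Z_def ZSpace_def \<sigma>_def by auto
    show "\<tau> \<in> Z \<rightarrow> Z" unfolding Z_def ZSpace_def \<tau>_def by auto
    fix z assume z: "z \<in> Z"
    show "\<tau> (\<sigma> z) = z"
    proof (rule PiE_ext[of _ "carrier_vec m" "\<lambda>_. UNIV"])
      show "\<tau> (\<sigma> z) \<in> carrier_vec m \<rightarrow>\<^sub>E UNIV" unfolding \<tau>_def by auto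
      show "z \<in> carrier_vec m \<rightarrow>\<^sub>E UNIV" using z unfolding Z_def ZSpace_def .
      fix x :: "bit vec" assume x: "x \<in> carrier_vec m"
      have "B *\<^sub>v x + B *\<^sub>v b \<in> carrier_vec m" using B x Bb by simp
      then show "\<tau> (\<sigma> z) x = z x" using x unfolding \<tau>_def \<sigma>_def
        by (simp add: affine_inv[OF A B AB b x])
    qed
    show "\<sigma> (\<tau> z) = z"
    proof (rule PiE_ext[of _ "carrier_vec m" "\<lambda>_. UNIV"])
      show "\<sigma> (\<tau> z) \<in> carrier_vec m \<rightarrow>\<^sub>E UNIV" unfolding \<sigma>_def by auto
      show "z \<in> carrier_vec m \<rightarrow>\<^sub>E UNIV" using z unfolding Z_def ZSpace_def .
      fix x :: "bit vec" assume x: "x \<in> carrier_vec m"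
      have "A *\<^sub>v x + b \<in> carrier_vec m" using A x b by simp
      then show "\<sigma> (\<tau> z) x = z x" using x unfolding \<tau>_def \<sigma>_def
        by (simp add: affine_inv2[OF A B BA b x])
    qed
  qed
  have bij\<phi>: "bij_betw (\<lambda>x. A *\<^sub>v x + b) (carrier_vec m) (carrier_vec m)"
  proof (rule bij_betwI[where g = "\<lambda>x. B *\<^sub>v x + B *\<^sub>v b"])
    show "(\<lambda>x. A *\<^sub>v x + b) \<in> carrier_vec m \<rightarrow> carrier_vec m" using A b by auto
    show "(\<lambda>x. B *\<^sub>v x + B *\<^sub>v b) \<in> carrier_vec m \<rightarrow> carrier_vec m" using B Bb by auto
    fix x :: "bit vec" assume x: "x \<in> carrier_vec m"
    show "B *\<^sub>v (A *\<^sub>v x + b) + B *\<^sub>v b = x" by (rule affine_inv2[OF A B BA b x])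
    show "A *\<^sub>v (B *\<^sub>v x + B *\<^sub>v b) + b = x" by (rule affine_inv[OF A B AB b x])
  qed
  have zp: "zprob m \<delta> (\<sigma> z) = zprob m \<delta> z" for z
  proof -
    have "zprob m \<delta> (\<sigma> z) = (\<Prod>x\<in>carrier_vec m. if z (A *\<^sub>v x + b) = 1 then \<delta> else 1 - \<delta>)"
      unfolding zprob_def \<sigma>_def by (intro prod.cong) auto
    also have "\<dots> = zprob m \<delta> z" unfolding zprob_def
      by (rule prod.reindex_bij_betw[OF bij\<phi>, of "\<lambda>y. if z y = 1 then \<delta> else 1 - \<delta>"])
    finally show ?thesis .
  qed
  have Wr\<sigma>: "Wr m r (\<sigma> z) = Wr m r (\<lambda>x. z (A *\<^sub>v x + b))" for z
    by (rule Wr_cong) (simp add: \<sigma>_def)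
  have Wgt\<sigma>: "Wgt m r (\<sigma> z) = Wgt m r (\<lambda>x. z (A *\<^sub>v x + b))" for z
    by (rule Wgt_cong) (simp add: \<sigma>_def)
  define h where "h = map_prod \<pi> \<sigma>"
  have bijh: "bij_betw h (G \<times> Z) (G' \<times> Z)" unfolding h_def by (rule bij_betw_map_prod[OF bij\<pi> bij\<sigma>])
  have ph: "(\<lambda>(u, z). zprob m \<delta> z / real (card G')) (h \<omega>) = (\<lambda>(u, z). zprob m \<delta> z / real (card G)) \<omega>" for \<omega>
    by (cases \<omega>) (simp add: h_def zp cardG)
  have e1: "entropy2 (G' \<times> Z) (\<lambda>(u, z). zprob m \<delta> z / real (card G'))
              (\<lambda>(u, z). ((\<lambda>S. u S + Wr m r z S), Wgt m r z))
          = entropy2 (G \<times> Z) (\<lambda>(u, z). zprob m \<delta> z / real (card G))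
              (\<lambda>(u, z). ((\<lambda>S. u S + Wr m r z S), Wgt m r z))"
    (is "?L = ?R")
  proof -
    have "?L = entropy2 (G \<times> Z) (\<lambda>(u, z). zprob m \<delta> z / real (card G))
              (\<lambda>\<omega>. (\<lambda>(u, z). ((\<lambda>S. u S + Wr m r z S), Wgt m r z)) (h \<omega>))"
      by (rule entropy_reindex[OF bijh]) (rule ph)
    also have "\<dots> = ?R"
    proof (rule entropy_equiv)
      fix \<omega> \<omega>' assume w: "\<omega> \<in> G \<times> Z" and w': "\<omega>' \<in> G \<times> Z"
      obtain u z where uz: "\<omega> = (u, z)" "u \<in> G" using w by auto
      obtain u' z' where uz': "\<omega>' = (u', z')" "u' \<in> G" using w' by auto
      show "((\<lambda>(u, z). ((\<lambda>S. u S + Wr m r z S), Wgt m r z)) (h \<omega>) =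
            (\<lambda>(u, z). ((\<lambda>S. u S + Wr m r z S), Wgt m r z)) (h \<omega>')) =
            ((\<lambda>(u, z). ((\<lambda>S. u S + Wr m r z S), Wgt m r z)) \<omega> =
            (\<lambda>(u, z). ((\<lambda>S. u S + Wr m r z S), Wgt m r z)) \<omega>')"
        using key_equiv[OF A B AB b, of u r u' z z'] uz uz' Gv
        by (auto simp: h_def Wr\<sigma> Wgt\<sigma> \<pi>_def)
    qed
    finally show ?thesis .
  qed
  have e2: "entropy2 (G' \<times> Z) (\<lambda>(u, z). zprob m \<delta> z / real (card G')) (\<lambda>(u, z). Wgt m r z)
          = entropy2 (G \<times> Z) (\<lambda>(u, z). zprob m \<delta> z / real (card G)) (\<lambda>(u, z). Wgt m r z)"
    (is "?L = ?R")
  proof -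
    have "?L = entropy2 (G \<times> Z) (\<lambda>(u, z). zprob m \<delta> z / real (card G))
              (\<lambda>\<omega>. (\<lambda>(u, z). Wgt m r z) (h \<omega>))"
      by (rule entropy_reindex[OF bijh]) (rule ph)
    also have "\<dots> = ?R"
    proof (rule entropy_equiv)
      fix \<omega> \<omega>' assume w: "\<omega> \<in> G \<times> Z" and w': "\<omega>' \<in> G \<times> Z"
      obtain u z where uz: "\<omega> = (u, z)" using w by auto
      obtain u' z' where uz': "\<omega>' = (u', z')" using w' by auto
      show "((\<lambda>(u, z). Wgt m r z) (h \<omega>) = (\<lambda>(u, z). Wgt m r z) (h \<omega>')) =
            ((\<lambda>(u, z). Wgt m r z) \<omega> = (\<lambda>(u, z). Wgt m r z) \<omega>')"
        using wgt_equiv[OF A B AB b, of r z z'] uz uz'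
        by (auto simp: h_def Wgt\<sigma>)
    qed
    finally show ?thesis .
  qed
  have e3: "entropy2 G' (\<lambda>u. 1 / real (card G')) id = entropy2 G (\<lambda>u. 1 / real (card G)) id"
  proof -
    have "entropy2 G' (\<lambda>u. 1 / real (card G')) id = entropy2 G (\<lambda>u. 1 / real (card G)) (\<lambda>u. id (\<pi> u))"
      by (rule entropy_reindex[OF bij\<pi>]) (simp add: cardG)
    also have "\<dots> = entropy2 G (\<lambda>u. 1 / real (card G)) id"
      by (rule entropy_equiv) (use inj\<pi> in \<open>auto simp: inj_on_def\<close>)
    finally show ?thesis .
  qed
  have dW: "dist_W m \<delta> r H =
      (entropy2 (H \<times> Z) (\<lambda>(u, z). zprob m \<delta> z / real (card H)) (\<lambda>(u, z). ((\<lambda>S. u S + Wr m r z S), Wgt m r z))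
      - entropy2 (H \<times> Z) (\<lambda>(u, z). zprob m \<delta> z / real (card H)) (\<lambda>(u, z). Wgt m r z))
      - (entropy2 H (\<lambda>u. 1 / real (card H)) id
        + cond_entropy2 (ZSpace m) (zprob m \<delta>) (Wr m r) (Wgt m r)) / 2" for H
    unfolding dist_W_def cond_entropy2_def Z_def
    by (simp add: case_prod_unfold)
  show ?thesis
    unfolding dW G'_def[symmetric, unfolded \<pi>_def] using e1 e2 e3 by simp
qed


end
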